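(* Consider the continuous stirred tank reactor model \[ \dot C_A = \theta_1 - \theta_2 C_A - k_0 e^{-\theta_5/T} C_A,\qquad \dot T = \theta_2 (T_{in}-T) - \theta_3 k_0 e^{-\theta_5/T} C_A + \theta_4 u, \] with states $C_A(t)>0$, $T(t)>0$, measured signals $C_A, T, T_{in}, u$, known constant $k_0>0$ and unknown constant parameters $\theta=\mathrm{col}(\theta_1,\dots,\theta_5)$. Fix $\lambda>0$, let $p=d/dt$, and define the filtered signals \[ y := \tfrac{\lambda p}{p+\lambda}(-T),\qquad \varphi := \mathrm{col}\Big(1,\ \tfrac{\lambda}{p+\lambda}(T-T_{in}),\ \tfrac{\lambda p}{p+\lambda}(-C_A),\ \tfrac{\lambda}{p+\lambda}(-u),\ \tfrac{\lambda}{p+\lambda}(-C_A)\Big), \] so that, neglecting exponentially decaying terms due to filter initial conditions, $y=\eta^\top\varphi$ with $\eta:=\mathrm{col}(\theta_1\theta_3,\theta_2,\theta_3,\theta_4,\theta_2\theta_3)$. Assume $\varphi$ is interval exciting, i.e. there exist $c_c>0$, $t_c>0$ with $\int_0^{t_c}\varphi(s)\varphi^\top(s)\,ds \ge c_c I_5$. Consider the estimator \[ \begin{aligned} \dot{\hat\mu} &= \alpha F\varphi(y-\varphi^\top\hat\mu),\quad \hat\mu(0)=\mu^0\in\mathbb{R}^5,\\ \dot F &= -\alpha F\varphi\varphi^\top F + \beta F,\quad F(0)=\tfrac{1}{f_0}I_5,\\ \dot{\hat\eta}_{1,4} &= \gamma_a\Delta(\mathcal{Y}_{1,4}-\Delta\hat\eta_{1,4}),\quad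 \hat\eta_{1,4}(0)=\eta^0_{1,4}\in\mathbb{R}^4_+,\\ \dot z &= -\beta z,\quad z(0)=1, \end{aligned} \] where $\beta:=\beta_0\big(1-\|F\|/M\big)$, $\Delta:=\det\{I_5-zf_0F\}$, $\mathcal{Y}:=\mathrm{adj}\{I_5-zf_0F\}[\hat\mu - zf_0F\mu^0]$, and the tuning gains satisfy $\alpha>0$, $f_0>0$, $\beta_0>0$, $M\ge 1/f_0$, $\gamma_a>0$. Define the parameter estimates $\hat\theta_{2,4}:=\hat\eta_{2,4}$ and $\hat\theta_1:=\hat\eta_1/\hat\eta_3$. Then, for all $f_0>0$ and all such initial conditions of the estimates, $\lim_{t\to\infty}|\tilde\theta_{1,4}(t)|=0$ exponentially, with all signals bounded, where $\tilde\theta_{1,4}:=\hat\theta_{1,4}-\theta_{1,4}$.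
   Context: For a vector $a=\mathrm{col}(a_1,\dots,a_n)$, $a_{i,j}:=\mathrm{col}(a_i,\dots,a_j)$. For a transfer function $\mathcal H(p)$, $\mathcal H(p)(u)$ denotes the output of the corresponding LTI filter driven by the signal $u$. $\mathrm{adj}$ denotes the adjugate matrix and $\|\cdot\|$ the Euclidean (induced) matrix norm. The parameters are $\theta=\mathrm{col}\big(\tfrac{q}{V}C_{in},\tfrac{q}{V},\tfrac{\Delta H}{\rho C_p},\tfrac{hA}{\rho C_p V},\tfrac{E}{R}\big)$ of physical constants, and $u:=T_w-T$ with $T_w$ the heat exchanger temperature. *)

theory Defs
  imports "HOL-Analysis.Analysis"
begin

text \<open>Adjugate (classical adjoint) of a square matrix: the transpose of the cofactor
  matrix, where the (j,i) cofactor is the determinant of A with row j replaced by the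
  i-th standard basis row (Laplace expansion).  Hence adj A * A = A * adj A = det A * I.\<close>
definition adjugate :: "real^'n^'n \<Rightarrow> real^'n^'n" where
  "adjugate A = (\<chi> i j. det (\<chi> k l. if k = j then (if l = i then 1 else 0) else A $ k $ l))"

definition mat_norm :: "real^'n^'m \<Rightarrow> real" where
  "mat_norm A = onorm (\<lambda>x. A *v x)"

end

theory Submission
  imports Defs
begin


lemma exhaust_5:
  fixes x :: 5
  shows "x = 1 \<or> x = 2 \<or> x = 3 \<or> x = 4 \<or> x = 5"
proof (induct x)
  case (of_int z)
  then have "z = 0 \<or> z = 1 \<or> z = 2 \<or> z = 3 \<or> z = 4" by fastforce
  then show ?case by auto
qed
lemma UNIV_5: "UNIV = {1, 2, 3, 4, 5::5}"
  using exhaust_5 by auto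
lemma sum_5: "sum f (UNIV::5 set) = f 1 + f 2 + f 3 + f 4 + f 5"
  unfolding UNIV_5 by (simp add: ac_simps)
lemma vector_5 [simp]:
 "(vector [a,b,c,d,e] ::('a::zero)^5)$1 = a"
 "(vector [a,b,c,d,e] ::('a::zero)^5)$2 = b"
 "(vector [a,b,c,d,e] ::('a::zero)^5)$3 = c"
 "(vector [a,b,c,d,e] ::('a::zero)^5)$4 = d"
 "(vector [a,b,c,d,e] ::('a::zero)^5)$5 = e"
  unfolding vector_def by simp_all
lemma vector_4 [simp]:
 "(vector [a,b,c,d] ::('a::zero)^4)$1 = a"
 "(vector [a,b,c,d] ::('a::zero)^4)$2 = b"
 "(vector [a,b,c,d] ::('a::zero)^4)$3 = c"
 "(vector [a,b,c,d] ::('a::zero)^4)$4 = d"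
  unfolding vector_def by simp_all


lemma det_row_col_swap:
  fixes A :: "real^'n^'n"
  shows "det (\<chi> k l. if k = j then (if l = i then 1 else 0) else A$k$l) =
         det (\<chi> k l. if l = i then (if k = j then 1 else 0) else A$k$l)"
  unfolding det_def
proof (rule sum.cong[OF refl])
  fix p assume "p \<in> {p. p permutes (UNIV::'n set)}"
  then have pp: "p permutes UNIV" by simp
  show "of_int (sign p) * (\<Prod>k\<in>UNIV. (\<chi> k l. if k = j then (if l = i then 1 else 0) else A$k$l) $ k $ p k) =
        of_int (sign p) * (\<Prod>k\<in>UNIV. (\<chi> k l. if l = i then (if k = j then 1 else 0) else A$k$l) $ k $ p k)"
  proof (cases "p j = i")
    case True
    have "k \<noteq> j \<Longrightarrow> p k \<noteq> i" for k using True pp by (metis permutes_inj injD)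
    then have "(\<Prod>k\<in>UNIV. (\<chi> k l. if k = j then (if l = i then 1 else 0) else A$k$l) $ k $ p k) =
        (\<Prod>k\<in>UNIV. (\<chi> k l. if l = i then (if k = j then 1 else 0) else A$k$l) $ k $ p k)"
      using True by (intro prod.cong) auto
    then show ?thesis by simp
  next
    case False
    obtain k where k: "p k = i" using pp by (metis permutes_surj surjD)
    have kj: "k \<noteq> j" using k False by auto
    have "(\<Prod>k\<in>UNIV. (\<chi> k l. if k = j then (if l = i then 1 else 0) else A$k$l) $ k $ p k) = 0"
      by (rule prod_zero) (use False in auto)
    moreover have "(\<Prod>k\<in>UNIV. (\<chi> k l. if l = i then (if k = j then 1 else 0) else A$k$l) $ k $ p k) = 0"
      by (rule prod_zero) (use k kj in \<open>auto intro!: bexI[of _ k]\<close>)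
    ultimately show ?thesis by (metis (no_types, lifting))
  qed
qed

lemma det_col_linear:
  fixes A :: "real^'n^'n"
  shows "det (\<chi> k l. if l = i then y$k else A$k$l) =
         (\<Sum>j\<in>UNIV. y$j * det (\<chi> k l. if l = i then (if k = j then 1 else 0) else A$k$l))"
proof -
  have "det (\<chi> k l. if l = i then y$k else A$k$l) =
        det (\<chi> l. if l = i then (\<Sum>j\<in>UNIV. y$j *s axis j 1) else row l (transpose A))"
    by (subst det_transpose[symmetric], rule arg_cong[where f=det])
       (auto simp: vec_eq_iff transpose_def row_def axis_def sum.delta' if_distrib cong: if_cong)
  also have "\<dots> = (\<Sum>j\<in>UNIV. det (\<chi> l. if l = i then y$j *s axis j 1 else row l (transpose A)))"
    by (rule det_linear_row_sum) simp
  also have "\<dots> = (\<Sum>j\<in>UNIV. y$j * det (\<chi> l. if l = i then axis j 1 else row l (transpose A)))"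
    by (simp add: det_row_mul)
  also have "\<dots> = (\<Sum>j\<in>UNIV. y$j * det (\<chi> k l. if l = i then (if k = j then 1 else 0) else A$k$l))"
    apply (rule sum.cong[OF refl])
    apply (subst det_transpose[symmetric])
    apply (rule arg_cong[where f="\<lambda>d. _ * d"], rule arg_cong[where f=det])
    apply (auto simp: vec_eq_iff transpose_def row_def axis_def)
    done
  finally show ?thesis .
qed

lemma adjugate_mult:
  fixes A :: "real^'n^'n"
  shows "adjugate A *v (A *v x) = det A *\<^sub>R x"
proof -
  have h: "(adjugate A *v y) $ i = det (\<chi> k l. if l = i then y$k else A$k$l)" for y i
    unfolding det_col_linear adjugate_def
    by (simp add: matrix_vector_mult_def det_row_col_swap mult.commute)
  have "(adjugate A *v (A *v x)) $ i = x$i * det A" for i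
    unfolding h using cramer_lemma[where A=A and x=x and k=i] by simp
  then show ?thesis by (simp add: vec_eq_iff)
qed



lemma matrix_add_rdistrib: "((B + C) ** A) = (B ** A) + (C ** A)"
  by (vector matrix_matrix_mult_def sum.distrib[symmetric] field_simps)

lemma bilinear_matrix_mult: "bilinear (\<lambda>(A::real^'n^'m) (B::real^'p^'n). A ** B)"
  unfolding bilinear_def
  by (auto intro!: linearI simp: matrix_add_ldistrib matrix_add_rdistrib
      matrix_scalar_ac scalar_matrix_assoc)

lemma bounded_bilinear_matrix_mult: "bounded_bilinear (\<lambda>(A::real^'n^'m) (B::real^'p^'n). A ** B)"
  using bilinear_matrix_mult bilinear_conv_bounded_bilinear by blast

lemma bounded_bilinear_matrix_vector_mult: "bounded_bilinear (\<lambda>(A::real^'n^'m) (x::real^'n). A *v x)"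
proof -
  have "bilinear (\<lambda>(A::real^'n^'m) (x::real^'n). A *v x)"
    unfolding bilinear_def
    by (auto intro!: linearI simp: matrix_vector_right_distrib matrix_vector_mult_add_rdistrib
        matrix_vector_mult_scaleR scaleR_matrix_vector_assoc)
  then show ?thesis using bilinear_conv_bounded_bilinear by blast
qed

lemma deriv_nonneg_mono:
  fixes f :: "real \<Rightarrow> real"
  assumes "a \<le> b"
    and "\<And>x. a \<le> x \<Longrightarrow> x \<le> b \<Longrightarrow> (f has_real_derivative f' x) (at x within {a..b})"
    and "\<And>x. a < x \<Longrightarrow> x < b \<Longrightarrow> f' x \<ge> 0"
  shows "f a \<le> f b"
proof (cases "a = b")
  case True then show ?thesis by simp
next
  case False
  then have ab: "a < b" using assms(1) by simp
  have "\<exists>x\<in>{a<..<b}. f b - f a = (\<lambda>h. h * f' x) (b - a)"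
    by (rule mvt_simple[OF ab]) (use assms(2) in \<open>auto simp: has_field_derivative_def mult.commute[of _ "f' _"]\<close>)
  then obtain x where "x \<in> {a<..<b}" "f b - f a = (b - a) * f' x" by auto
  moreover have "f' x \<ge> 0" using assms(3) \<open>x \<in> {a<..<b}\<close> by auto
  ultimately have "f b - f a \<ge> 0" using ab by simp
  then show ?thesis by simp
qed

lemma ode_zero:
  fixes f :: "real \<Rightarrow> 'a::real_inner"
  assumes T: "0 \<le> T" and L: "0 \<le> L"
    and d: "\<And>t. 0 \<le> t \<Longrightarrow> t \<le> T \<Longrightarrow> (f has_vector_derivative f' t) (at t within {0..T})"
    and b: "\<And>t. 0 \<le> t \<Longrightarrow> t \<le> T \<Longrightarrow> norm (f' t) \<le> L * norm (f t)"
    and f0: "f 0 = 0"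
  shows "f T = 0"
proof -
  define g where "g t = exp (- 2 * L * t) * (f t \<bullet> f t)" for t
  define g' where "g' t = exp (- 2 * L * t) * (- 2 * L) * (f t \<bullet> f t) + exp (- 2 * L * t) * (2 * (f t \<bullet> f' t))" for t
  have gd: "((\<lambda>t. - g t) has_real_derivative - g' t) (at t within {0..T})" if "0 \<le> t" "t \<le> T" for t
  proof -
    have "((\<lambda>t. f t \<bullet> f t) has_vector_derivative (f t \<bullet> f' t + f' t \<bullet> f t)) (at t within {0..T})"
      using bounded_bilinear.has_vector_derivative[OF bounded_bilinear_inner d[OF that] d[OF that]] .
    moreover have "f t \<bullet> f' t + f' t \<bullet> f t = 2 * (f t \<bullet> f' t)" by (simp add: inner_commute)
    ultimately have 1: "((\<lambda>t. f t \<bullet> f t) has_real_derivative 2 * (f t \<bullet> f' t)) (at t within {0..T})"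
      by (simp add: has_real_derivative_iff_has_vector_derivative)
    have 2: "((\<lambda>t. exp (- 2 * L * t)) has_real_derivative exp (- 2 * L * t) * (- 2 * L)) (at t within {0..T})"
      using DERIV_chain2[OF DERIV_exp, of "\<lambda>t. - 2 * L * t" "- 2 * L"]
      by (metis DERIV_cmult_Id mult_minus_left)
    have "(g has_real_derivative g' t) (at t within {0..T})"
      unfolding g_def g'_def using DERIV_mult[OF 2 1] by (simp add: distrib_left mult.commute)
    then show ?thesis by (rule DERIV_minus)
  qed
  have nn: "- g' t \<ge> 0" if "0 \<le> t" "t \<le> T" for t
  proof -
    have "f t \<bullet> f' t \<le> norm (f t) * norm (f' t)" by (rule norm_cauchy_schwarz)
    also have "\<dots> \<le> norm (f t) * (L * norm (f t))" using b[OF that] by (simp add: mult_left_mono)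
    also have "\<dots> = L * (f t \<bullet> f t)" by (simp add: power2_norm_eq_inner[symmetric] power2_eq_square)
    finally have "- 2 * L * (f t \<bullet> f t) + 2 * (f t \<bullet> f' t) \<le> 0" by simp
    then have "exp (- 2 * L * t) * (- 2 * L * (f t \<bullet> f t) + 2 * (f t \<bullet> f' t)) \<le> 0"
      by (simp add: mult_nonneg_nonpos)
    moreover have "g' t = exp (- 2 * L * t) * (- 2 * L * (f t \<bullet> f t) + 2 * (f t \<bullet> f' t))"
      unfolding g'_def by (simp add: ring_distribs)
    ultimately show ?thesis by linarith
  qed
  have "(\<lambda>t. - g t) 0 \<le> (\<lambda>t. - g t) T"
    apply (rule deriv_nonneg_mono[where f = "\<lambda>t. - g t" and a = 0 and b = T and f' = "\<lambda>t. - g' t"])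
      apply (rule T)
     apply (erule (1) gd)
    apply (rule nn; simp)
    done
  then have "g T \<le> 0" using f0 by (simp add: g_def)
  then have "f T \<bullet> f T \<le> 0" unfolding g_def by (simp add: mult_le_0_iff)
  then show ?thesis by (metis inner_eq_zero_iff inner_ge_zero order_antisym)
qed

lemma det_bound:
  fixes B :: "real^'n^'n"
  assumes "\<And>i j. \<bar>B$i$j\<bar> \<le> C"
  shows "\<bar>det B\<bar> \<le> real (fact CARD('n)) * C ^ CARD('n)"
proof -
  have C0: "0 \<le> C" using assms[of undefined undefined] by linarith
  have "\<bar>det B\<bar> \<le> (\<Sum>p\<in>{p. p permutes (UNIV::'n set)}. \<bar>of_int (sign p) * (\<Prod>i\<in>UNIV. B$i$p i)\<bar>)"
    unfolding det_def by (rule sum_abs)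
  also have "\<dots> \<le> (\<Sum>p\<in>{p. p permutes (UNIV::'n set)}. C ^ CARD('n))"
  proof (rule sum_mono)
    fix p
    have "\<bar>of_int (sign p) * (\<Prod>i\<in>UNIV. B$i$p i)\<bar> = (\<Prod>i\<in>UNIV. \<bar>B$i$p i\<bar>)"
      by (simp add: abs_mult sign_def abs_prod)
    also have "\<dots> \<le> (\<Prod>i\<in>(UNIV::'n set). C)"
      by (rule prod_mono) (use assms in auto)
    finally show "\<bar>of_int (sign p) * (\<Prod>i\<in>UNIV. B$i$p i)\<bar> \<le> C ^ CARD('n)" by simp
  qed
  also have "\<dots> = real (fact CARD('n)) * C ^ CARD('n)"
    by (simp add: card_permutations)
  finally show ?thesis .
qed



lemma sym_inner:
  fixes F :: "real^'n^'n"
  assumes "transpose F = F"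
  shows "a \<bullet> (F *v c) = c \<bullet> (F *v a)"
proof -
  have "a \<bullet> (F *v c) = (a v* F) \<bullet> c" by (simp add: dot_lmul_matrix)
  also have "a v* F = F *v a" by (metis assms vector_transpose_matrix)
  finally show ?thesis by (simp add: inner_commute)
qed

lemma psd_cs:
  fixes F :: "real^'n^'n"
  assumes sym: "transpose F = F" and psd: "\<And>x. 0 \<le> x \<bullet> (F *v x)"
  shows "(a \<bullet> (F *v c))^2 \<le> (a \<bullet> (F *v a)) * (c \<bullet> (F *v c))"
proof -
  define p where "p = a \<bullet> (F *v a)"
  define q where "q = a \<bullet> (F *v c)"
  define r where "r = c \<bullet> (F *v c)"
  have exp: "0 \<le> p - 2 * t * q + t^2 * r" for t
  proof -
    have "0 \<le> (a - t *\<^sub>R c) \<bullet> (F *v (a - t *\<^sub>R c))" by (rule psd)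
    also have "\<dots> = p - t * (a \<bullet> (F *v c)) - t * (c \<bullet> (F *v a)) + t^2 * r"
      unfolding p_def r_def
      by (simp add: matrix_vector_mult_diff_distrib matrix_vector_mult_scaleR inner_diff_left
          inner_diff_right power2_eq_square algebra_simps)
    also have "c \<bullet> (F *v a) = q" unfolding q_def by (rule sym_inner[OF sym, symmetric])
    finally show ?thesis unfolding q_def by (simp add: algebra_simps)
  qed
  have r0: "0 \<le> r" unfolding r_def by (rule psd)
  show ?thesis
  proof (cases "r = 0")
    case True
    have "q = 0"
    proof (rule ccontr)
      assume "q \<noteq> 0"
      have "0 \<le> p - 2 * ((p + 1) / (2 * q)) * q" using exp[of "(p + 1) / (2 * q)"] True by simp
      also have "\<dots> = -1" using \<open>q \<noteq> 0\<close> by (simp add: field_simps)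
      finally show False by simp
    qed
    then show ?thesis using True unfolding p_def q_def r_def by simp
  next
    case False
    then have rp: "r > 0" using r0 by simp
    have "0 \<le> p - 2 * (q / r) * q + (q / r)^2 * r" by (rule exp)
    also have "\<dots> = p - q^2 / r" using rp by (simp add: field_simps power2_eq_square)
    finally have "q^2 / r \<le> p" by simp
    then have "q^2 \<le> p * r" using rp by (simp add: divide_le_eq)
    then show ?thesis unfolding p_def q_def r_def .
  qed
qed

lemma norm_F_bound:
  fixes F :: "real^'n^'n"
  assumes sym: "transpose F = F" and psd: "\<And>x. 0 \<le> x \<bullet> (F *v x)"
  shows "(norm (F *v u))^2 \<le> onorm ((*v) F) * (u \<bullet> (F *v u))"
proof -
  define w where "w = F *v u"
  have e1: "w \<bullet> w = u \<bullet> (F *v w)" unfolding w_def by (rule sym_inner[OF sym, symmetric])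
  have "(w \<bullet> w)^2 \<le> (u \<bullet> (F *v u)) * (w \<bullet> (F *v w))"
    unfolding e1 by (rule psd_cs[OF sym psd])
  also have "w \<bullet> (F *v w) \<le> onorm ((*v) F) * (w \<bullet> w)"
  proof -
    have "w \<bullet> (F *v w) \<le> norm w * norm (F *v w)" by (rule norm_cauchy_schwarz)
    also have "\<dots> \<le> norm w * (onorm ((*v) F) * norm w)"
      by (rule mult_left_mono[OF onorm[OF matrix_vector_mul_bounded_linear]]) simp
    finally show ?thesis by (simp add: power2_norm_eq_inner[symmetric] power2_eq_square mult_ac)
  qed
  then have "(u \<bullet> (F *v u)) * (w \<bullet> (F *v w)) \<le> (u \<bullet> (F *v u)) * (onorm ((*v) F) * (w \<bullet> w))"
    by (rule mult_left_mono) (rule psd)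
  finally have *: "(w \<bullet> w)^2 \<le> (onorm ((*v) F) * (u \<bullet> (F *v u))) * (w \<bullet> w)" by (simp add: mult_ac)
  show ?thesis
  proof (cases "w = 0")
    case True then show ?thesis unfolding w_def[symmetric]
      using psd[of u] onorm_pos_le[OF matrix_vector_mul_bounded_linear] by simp
  next
    case False
    then have "w \<bullet> w > 0" by simp
    with * have "w \<bullet> w \<le> onorm ((*v) F) * (u \<bullet> (F *v u))"
      by (simp add: power2_eq_square)
    then show ?thesis unfolding w_def by (simp add: power2_norm_eq_inner)
  qed
qed

lemma key_lower:
  fixes F P :: "real^'n^'n"
  assumes FP: "F ** P = mat 1" and sym: "transpose F = F" and psd: "\<And>x. 0 \<le> x \<bullet> (F *v x)"
  shows "v \<bullet> v \<le> onorm ((*v) F) * (v \<bullet> (P *v v))"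
proof -
  define u where "u = P *v v"
  have "F *v u = v" unfolding u_def by (simp add: matrix_vector_mul_assoc FP)
  then have "v \<bullet> v = (norm (F *v u))^2" by (simp add: power2_norm_eq_inner)
  also have "\<dots> \<le> onorm ((*v) F) * (u \<bullet> (F *v u))" by (rule norm_F_bound[OF sym psd])
  also have "u \<bullet> (F *v u) = v \<bullet> (P *v v)" using \<open>F *v u = v\<close> unfolding u_def by (simp add: inner_commute)
  finally show ?thesis .
qed

lemma key_upper:
  fixes F P :: "real^'n^'n"
  assumes PF: "P ** F = mat 1" and c: "c > 0" and pos: "\<And>v. c * (v \<bullet> v) \<le> v \<bullet> (P *v v)"
  shows "onorm ((*v) F) \<le> 1 / c"
proof (rule onorm_le)
  fix x :: "real^'n"
  define w where "w = F *v x"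
  have Pw: "P *v w = x" unfolding w_def by (simp add: matrix_vector_mul_assoc PF)
  have "c * (norm w)^2 \<le> w \<bullet> x" using pos[of w] Pw by (simp add: power2_norm_eq_inner)
  also have "\<dots> \<le> norm w * norm x" by (rule norm_cauchy_schwarz)
  finally have "c * (norm w)^2 \<le> norm w * norm x" .
  then have "c * norm w \<le> norm x"
    by (cases "norm w = 0") (auto simp: power2_eq_square mult.assoc[symmetric] mult.commute[of c])
  then show "norm (F *v x) \<le> 1 / c * norm x" unfolding w_def using c by (simp add: field_simps)
qed




lemma cont_from_rderiv:
  fixes f :: "real \<Rightarrow> real"
  assumes "\<forall>t\<ge>0. (f has_real_derivative f' t) (at t within {0..})"
  shows "continuous_on {0..} f"
  using assms by (auto simp: continuous_on_eq_continuous_within intro!: DERIV_continuous)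

lemma cont_from_vderiv:
  assumes "\<forall>t\<ge>0. (f has_vector_derivative f' t) (at t within {0..})"
  shows "continuous_on {0..} f"
  using assms by (auto intro!: continuous_on_vector_derivative)

lemma norm_matrix_le_entries:
  fixes A :: "real^'n^'m"
  shows "norm A \<le> (\<Sum>i\<in>UNIV. \<Sum>j\<in>UNIV. \<bar>A$i$j\<bar>)"
proof -
  have "norm A = L2_set (\<lambda>i. norm (A$i)) UNIV" by (simp add: norm_vec_def)
  also have "\<dots> \<le> (\<Sum>i\<in>UNIV. norm (A$i))" by (rule L2_set_le_sum) simp
  also have "\<dots> \<le> (\<Sum>i\<in>UNIV. \<Sum>j\<in>UNIV. \<bar>A$i$j\<bar>)" by (rule sum_mono) (rule norm_le_l1_cart)
  finally show ?thesis .
qed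

lemma norm_matrix_le_onorm:
  fixes A :: "real^'n^'m"
  shows "norm A \<le> real CARD('m) * real CARD('n) * onorm ((*v) A)"
proof -
  have "norm A \<le> (\<Sum>i\<in>UNIV. \<Sum>j\<in>UNIV. \<bar>A$i$j\<bar>)" by (rule norm_matrix_le_entries)
  also have "\<dots> \<le> (\<Sum>i\<in>(UNIV::'m set). \<Sum>j\<in>(UNIV::'n set). onorm ((*v) A))"
    by (intro sum_mono matrix_component_le_onorm)
  finally show ?thesis by simp
qed

lemma mat_norm_lipschitz:
  fixes A B :: "real^'n^'m"
  shows "\<bar>mat_norm A - mat_norm B\<bar> \<le> real CARD('m) * real CARD('n) * norm (A - B)"
proof -
  have c: "onorm ((*v) C) \<le> real CARD('m) * real CARD('n) * norm C" for C :: "real^'n^'m"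
  proof (rule onorm_le_matrix_component)
    fix i j
    show "\<bar>C$i$j\<bar> \<le> norm C"
      using component_le_norm_cart[of "C$i" j] Finite_Cartesian_Product.norm_nth_le[of C i] by linarith
  qed
  have t: "onorm ((*v) C) \<le> onorm ((*v) D) + onorm ((*v) (C - D))" for C D :: "real^'n^'m"
  proof -
    have e: "(*v) C = (\<lambda>x. D *v x + (C - D) *v x)"
      by (rule ext) (simp add: matrix_vector_mult_diff_rdistrib)
    show ?thesis unfolding e
      by (rule onorm_triangle) auto
  qed
  have 1: "mat_norm A \<le> mat_norm B + real CARD('m) * real CARD('n) * norm (A - B)"
    using t[of A B] c[of "A - B"] unfolding mat_norm_def by linarith
  have 2: "mat_norm B \<le> mat_norm A + real CARD('m) * real CARD('n) * norm (A - B)"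
  proof -
    have "onorm ((*v) (B - A)) \<le> real CARD('m) * real CARD('n) * norm (A - B)"
      using c[of "B - A"] by (simp add: norm_minus_commute)
    then show ?thesis using t[of B A] unfolding mat_norm_def by linarith
  qed
  from 1 2 show ?thesis by linarith
qed

lemma continuous_on_mat_norm:
  fixes F :: "real \<Rightarrow> real^'n^'m"
  assumes "continuous_on S F"
  shows "continuous_on S (\<lambda>t. mat_norm (F t))"
proof -
  have "(real CARD('m) * real CARD('n))-lipschitz_on UNIV (mat_norm :: real^'n^'m \<Rightarrow> real)"
    by (rule lipschitz_onI) (auto simp: dist_norm mat_norm_lipschitz)
  then have "continuous_on UNIV (mat_norm :: real^'n^'m \<Rightarrow> real)"
    by (rule lipschitz_on_continuous_on)
  then show ?thesis using assms
    by (metis continuous_on_compose2 subset_UNIV)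
qed

lemma continuous_on_det:
  fixes X :: "real \<Rightarrow> real^'n^'n"
  assumes "continuous_on S X"
  shows "continuous_on S (\<lambda>t. det (X t))"
  unfolding det_def
  by (intro continuous_intros assms)

lemma compact_bound:
  fixes f :: "real \<Rightarrow> 'a::real_normed_vector"
  assumes "continuous_on {a..b} f"
  obtains B where "B \<ge> 0" "\<And>t. a \<le> t \<Longrightarrow> t \<le> b \<Longrightarrow> norm (f t) \<le> B"
proof -
  have "compact (f ` {a..b})" by (rule compact_continuous_image[OF assms compact_Icc])
  then obtain B where "B > 0" "\<forall>x\<in>f ` {a..b}. norm x \<le> B"
    using compact_imp_bounded bounded_pos by metis
  then show ?thesis using that[of B] by auto
qed

lemma lin_ode_zero_mat:
  fixes X :: "real \<Rightarrow> real^'n^'n" and A :: "real \<Rightarrow> real^'n^'n"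
  assumes T: "0 \<le> T" and cA: "continuous_on {0..T} A"
    and d: "\<And>t. 0 \<le> t \<Longrightarrow> t \<le> T \<Longrightarrow> (X has_vector_derivative A t ** X t) (at t within {0..T})"
    and X0: "X 0 = 0"
  shows "X T = 0"
proof -
  obtain B where B: "B \<ge> 0" "\<And>t. 0 \<le> t \<Longrightarrow> t \<le> T \<Longrightarrow> norm (A t) \<le> B"
    using compact_bound[OF cA] by metis
  obtain K where K: "\<And>a b. norm ((a::real^'n^'n) ** (b::real^'n^'n)) \<le> norm a * norm b * K" "K \<ge> 0"
    using bounded_bilinear.nonneg_bounded[OF bounded_bilinear_matrix_mult] by metis
  show ?thesis
  proof (rule ode_zero[OF T _ d _ X0])
    show "0 \<le> B * K" using B K by simp
    fix t assume t: "0 \<le> t" "t \<le> T"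
    have "norm (A t ** X t) \<le> norm (A t) * norm (X t) * K" by (rule K)
    also have "\<dots> \<le> B * norm (X t) * K"
      using B(2)[OF t] K(2) by (intro mult_right_mono) auto
    finally show "norm (A t ** X t) \<le> B * K * norm (X t)" by (simp add: mult_ac)
  qed
qed

lemma lin_ode_zero_vec:
  fixes x :: "real \<Rightarrow> real^'n" and A :: "real \<Rightarrow> real^'n^'n"
  assumes T: "0 \<le> T" and cA: "continuous_on {0..T} A"
    and d: "\<And>t. 0 \<le> t \<Longrightarrow> t \<le> T \<Longrightarrow> (x has_vector_derivative A t *v x t) (at t within {0..T})"
    and x0: "x 0 = 0"
  shows "x T = 0"
proof -
  obtain B where B: "B \<ge> 0" "\<And>t. 0 \<le> t \<Longrightarrow> t \<le> T \<Longrightarrow> norm (A t) \<le> B"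
    using compact_bound[OF cA] by metis
  obtain K where K: "\<And>a b. norm ((a::real^'n^'n) *v (b::real^'n)) \<le> norm a * norm b * K" "K \<ge> 0"
    using bounded_bilinear.nonneg_bounded[OF bounded_bilinear_matrix_vector_mult] by metis
  show ?thesis
  proof (rule ode_zero[OF T _ d _ x0])
    show "0 \<le> B * K" using B K by simp
    fix t assume t: "0 \<le> t" "t \<le> T"
    have "norm (A t *v x t) \<le> norm (A t) * norm (x t) * K" by (rule K)
    also have "\<dots> \<le> B * norm (x t) * K"
      using B(2)[OF t] K(2) by (intro mult_right_mono) auto
    finally show "norm (A t *v x t) \<le> B * K * norm (x t)" by (simp add: mult_ac)
  qed
qed


lemma matrix_diff_ldistrib: "(A::real^'n^'m) ** (B - C) = A ** B - A ** C"
  by (rule bounded_bilinear.diff_right[OF bounded_bilinear_matrix_mult])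

lemma matrix_diff_rdistrib: "((B::real^'n^'m) - C) ** (A::real^'p^'n) = B ** A - C ** A"
  by (rule bounded_bilinear.diff_left[OF bounded_bilinear_matrix_mult])

lemma cont_mm:
  fixes X :: "real \<Rightarrow> real^'n^'m" and Y :: "real \<Rightarrow> real^'p^'n"
  shows "continuous_on S X \<Longrightarrow> continuous_on S Y \<Longrightarrow> continuous_on S (\<lambda>t. X t ** Y t)"
  by (rule bounded_bilinear.continuous_on[OF bounded_bilinear_matrix_mult])

lemma cont_mv:
  fixes X :: "real \<Rightarrow> real^'n^'m" and Y :: "real \<Rightarrow> real^'n"
  shows "continuous_on S X \<Longrightarrow> continuous_on S Y \<Longrightarrow> continuous_on S (\<lambda>t. X t *v Y t)"
  by (rule bounded_bilinear.continuous_on[OF bounded_bilinear_matrix_vector_mult])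

lemma matrix_minus_left: "(- (B::real^'n^'m)) ** (A::real^'p^'n) = - (B ** A)"
  by (rule bounded_bilinear.minus_left[OF bounded_bilinear_matrix_mult])

lemma matrix_minus_right: "(B::real^'n^'m) ** (- (A::real^'p^'n)) = - (B ** A)"
  by (rule bounded_bilinear.minus_right[OF bounded_bilinear_matrix_mult])

lemma transpose_add_m: "transpose ((A::real^'n^'m) + B) = transpose A + transpose B"
  by (simp add: transpose_def vec_eq_iff)

lemma bounded_linear_transpose_m: "bounded_linear (transpose :: real^'n^'m \<Rightarrow> real^'m^'n)"
proof -
  have "linear (transpose :: real^'n^'m \<Rightarrow> real^'m^'n)"
    by (rule linearI) (simp_all add: transpose_add_m transpose_scalar)
  then show ?thesis by (simp add: linear_conv_bounded_linear)
qed

lemma bounded_linear_quad: "bounded_linear (\<lambda>A::real^'n^'n. v \<bullet> (A *v v))"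
  by (rule bounded_linear_compose[OF bounded_linear_inner_right
        bounded_bilinear.bounded_linear_left[OF bounded_bilinear_matrix_vector_mult]])

lemma bounded_linear_mv: "bounded_linear (\<lambda>A::real^'n^'m. A *v v)"
  by (rule bounded_bilinear.bounded_linear_left[OF bounded_bilinear_matrix_vector_mult])

lemma mv_minus_left: "(- (A::real^'n^'m)) *v x = - (A *v x)"
  by (rule bounded_bilinear.minus_left[OF bounded_bilinear_matrix_vector_mult])


theorem proposition2:
  fixes C_A T T_in u :: "real \<Rightarrow> real"
    and k0 lam :: real
    and \<theta>1 \<theta>2 \<theta>3 \<theta>4 \<theta>5 :: real
    and vT vC w1 w4 y :: "real \<Rightarrow> real"
    and \<phi> :: "real \<Rightarrow> real^5"
    and \<eta> :: "real^5"
    and c_c t_c :: real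
    and \<alpha> f0 \<beta>0 M \<gamma>a :: real
    and \<mu>0 :: "real^5" and \<eta>0 :: "real^4"
    and \<mu>h :: "real \<Rightarrow> real^5" and F :: "real \<Rightarrow> real^5^5"
    and \<eta>h :: "real \<Rightarrow> real^4" and z :: "real \<Rightarrow> real"
    and \<beta> \<Delta> :: "real \<Rightarrow> real" and Yc :: "real \<Rightarrow> real^5"
    and \<theta>h :: "real \<Rightarrow> real^4"
  assumes
    \<comment> \<open>physical parameters (positive constants) and the plant\<close>
    theta_pos: "\<theta>1 > 0" "\<theta>2 > 0" "\<theta>3 > 0" "\<theta>4 > 0" "\<theta>5 > 0"
    and k0_pos: "k0 > 0"
    and states_pos: "\<forall>t\<ge>0. C_A t > 0 \<and> T t > 0"
    and plant_CA: "\<forall>t\<ge>0. (C_A has_real_derivative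
          (\<theta>1 - \<theta>2 * C_A t - k0 * exp (- \<theta>5 / T t) * C_A t)) (at t within {0..})"
    and plant_T: "\<forall>t\<ge>0. (T has_real_derivative
          (\<theta>2 * (T_in t - T t) - \<theta>3 * k0 * exp (- \<theta>5 / T t) * C_A t + \<theta>4 * u t))
          (at t within {0..})"
    \<comment> \<open>filters: vT = lambda/(p+lambda)(-T), vC = lambda/(p+lambda)(-C_A),
        w1 = lambda/(p+lambda)(T - T_in), w4 = lambda/(p+lambda)(-u);
        lambda p/(p+lambda) x = lambda (x - lambda/(p+lambda) x)\<close>
    and lam_pos: "lam > 0"
    and filt_vT: "\<forall>t\<ge>0. (vT has_real_derivative (- lam * vT t + lam * (- T t))) (at t within {0..})"
    and filt_vC: "\<forall>t\<ge>0. (vC has_real_derivative (- lam * vC t + lam * (- C_A t))) (at t within {0..})"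
    and filt_w1: "\<forall>t\<ge>0. (w1 has_real_derivative (- lam * w1 t + lam * (T t - T_in t))) (at t within {0..})"
    and filt_w4: "\<forall>t\<ge>0. (w4 has_real_derivative (- lam * w4 t + lam * (- u t))) (at t within {0..})"
    and y_def: "\<forall>t. y t = lam * (- T t - vT t)"
    and phi_def: "\<forall>t. \<phi> t = vector [1, w1 t, lam * (- C_A t - vC t), w4 t, vC t]"
    and eta_def: "\<eta> = vector [\<theta>1 * \<theta>3, \<theta>2, \<theta>3, \<theta>4, \<theta>2 * \<theta>3]"
    \<comment> \<open>linear regression (exponentially decaying filter transients neglected)\<close>
    and regression: "\<forall>t\<ge>0. y t = \<eta> \<bullet> \<phi> t"
    \<comment> \<open>interval excitation\<close>
    and IE: "c_c > 0" "t_c > 0"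
      "\<exists>Q. ((\<lambda>s. \<chi> i j. \<phi> s $ i * \<phi> s $ j) has_integral Q) {0..t_c} \<and>
           (\<forall>v::real^5. c_c * (v \<bullet> v) \<le> v \<bullet> (Q *v v))"
    \<comment> \<open>tuning gains\<close>
    and gains: "\<alpha> > 0" "f0 > 0" "\<beta>0 > 0" "M \<ge> 1 / f0" "\<gamma>a > 0"
    \<comment> \<open>initial condition of the estimate of eta_{1,4} in the positive orthant\<close>
    and eta0_pos: "\<forall>i. \<eta>0 $ i > 0"
    \<comment> \<open>auxiliary signals of the estimator\<close>
    and beta_def: "\<forall>t. \<beta> t = \<beta>0 * (1 - mat_norm (F t) / M)"
    and Delta_def: "\<forall>t. \<Delta> t = det (mat 1 - (z t * f0) *\<^sub>R F t)"
    and Y_def: "\<forall>t. Yc t = adjugate (mat 1 - (z t * f0) *\<^sub>R F t) *v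
                         (\<mu>h t - (z t * f0) *\<^sub>R (F t *v \<mu>0))"
    \<comment> \<open>estimator dynamics\<close>
    and mu_ode: "\<forall>t\<ge>0. (\<mu>h has_vector_derivative
          ((\<alpha> * (y t - \<phi> t \<bullet> \<mu>h t)) *\<^sub>R (F t *v \<phi> t))) (at t within {0..})"
    and mu_init: "\<mu>h 0 = \<mu>0"
    and F_ode: "\<forall>t\<ge>0. (F has_vector_derivative
          (- \<alpha> *\<^sub>R (F t ** (\<chi> i j. \<phi> t $ i * \<phi> t $ j) ** F t) + \<beta> t *\<^sub>R F t))
          (at t within {0..})"
    and F_init: "F 0 = (1 / f0) *\<^sub>R mat 1"
    and eta_ode: "\<forall>t\<ge>0. (\<eta>h has_vector_derivative
          ((\<gamma>a * \<Delta> t) *\<^sub>R (vector [Yc t $ 1, Yc t $ 2, Yc t $ 3, Yc t $ 4] - \<Delta> t *\<^sub>R \<eta>h t)))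
          (at t within {0..})"
    and eta_init: "\<eta>h 0 = \<eta>0"
    and z_ode: "\<forall>t\<ge>0. (z has_real_derivative (- \<beta> t * z t)) (at t within {0..})"
    and z_init: "z 0 = 1"
    \<comment> \<open>parameter estimates\<close>
    and thetah_def: "\<forall>t. \<theta>h t = vector [\<eta>h t $ 1 / \<eta>h t $ 3, \<eta>h t $ 2, \<eta>h t $ 3, \<eta>h t $ 4]"
  shows "(\<exists>c \<rho>. \<rho> > 0 \<and> (\<forall>t\<ge>0. norm (\<theta>h t - vector [\<theta>1, \<theta>2, \<theta>3, \<theta>4]) \<le> c * exp (- \<rho> * t)))
       \<and> bounded (\<mu>h ` {0..}) \<and> bounded (F ` {0..}) \<and> bounded (\<eta>h ` {0..})
       \<and> bounded (z ` {0..}) \<and> bounded (\<theta>h ` {0..})"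
  proof -
  define Phi where "Phi t = (\<chi> i j. \<phi> t $ i * \<phi> t $ j)" for t
  have Phi_v: "Phi t *v x = (\<phi> t \<bullet> x) *\<^sub>R \<phi> t" for t x
    by (simp add: Phi_def vec_eq_iff matrix_vector_mult_def inner_vec_def sum_distrib_left mult_ac)
  have Phi_T: "transpose (Phi t) = Phi t" for t
    by (simp add: Phi_def transpose_def vec_eq_iff mult.commute)
  have Phi_q: "v \<bullet> (Phi t *v v) = (\<phi> t \<bullet> v)^2" for t v
    by (simp add: Phi_v power2_eq_square inner_commute)
  have Mpos: "M > 0" using gains by (metis less_le_trans zero_less_divide_1_iff)
  have cF: "continuous_on {0..} F" by (rule cont_from_vderiv[OF F_ode])
  have cz: "continuous_on {0..} z" by (rule cont_from_rderiv[OF z_ode])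
  have cphi: "continuous_on {0..} \<phi>"
  proof -
    have c1: "continuous_on {0..} w1" by (rule cont_from_rderiv[OF filt_w1])
    have c4: "continuous_on {0..} w4" by (rule cont_from_rderiv[OF filt_w4])
    have cC: "continuous_on {0..} vC" by (rule cont_from_rderiv[OF filt_vC])
    have cA: "continuous_on {0..} C_A" by (rule cont_from_rderiv[OF plant_CA])
    have "continuous_on {0..} (\<lambda>t. \<chi> i. \<phi> t $ i)"
    proof (rule continuous_on_vec_lambda)
      fix i :: 5
      have "i = 1 \<or> i = 2 \<or> i = 3 \<or> i = 4 \<or> i = 5" by (rule exhaust_5)
      then show "continuous_on {0..} (\<lambda>t. \<phi> t $ i)"
        by (elim disjE) (simp_all add: phi_def c1 c4 cC cA continuous_intros)
    qed
    then show ?thesis by simp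
  qed
  have cPhi: "continuous_on {0..} Phi"
    unfolding Phi_def by (intro continuous_intros cphi)
  have beta_eq: "\<beta> = (\<lambda>t. \<beta>0 * (1 - mat_norm (F t) / M))" using beta_def by auto
  have cbeta: "continuous_on {0..} \<beta>"
    unfolding beta_eq by (intro continuous_intros continuous_on_mat_norm cF) (use Mpos in auto)
  have sub: "{0..T} \<subseteq> {0::real..}" for T by auto
  have zd: "(z has_real_derivative (- \<beta> t * z t)) (at t within {0..T})" if "0 \<le> t" for t T
    using z_ode that by (auto intro: DERIV_subset[OF _ sub])
  have Fd: "(F has_vector_derivative
          (- \<alpha> *\<^sub>R (F t ** Phi t ** F t) + \<beta> t *\<^sub>R F t)) (at t within {0..T})" if "0 \<le> t" for t T
    using F_ode that unfolding Phi_def by (auto intro: has_vector_derivative_within_subset[OF _ sub])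
  have mud: "(\<mu>h has_vector_derivative
          ((\<alpha> * (y t - \<phi> t \<bullet> \<mu>h t)) *\<^sub>R (F t *v \<phi> t))) (at t within {0..T})" if "0 \<le> t" for t T
    using mu_ode that by (auto intro: has_vector_derivative_within_subset[OF _ sub])
  define Bi where "Bi t = integral {0..t} \<beta>" for t
  have Bid: "(Bi has_real_derivative \<beta> t) (at t within {0..T})" if "0 \<le> t" "t \<le> T" for t T
    unfolding Bi_def has_real_derivative_iff_has_vector_derivative
    by (rule integral_has_vector_derivative) (use that continuous_on_subset[OF cbeta sub] in auto)
  have z_exp: "z t = exp (- Bi t)" if "0 \<le> t" for t
  proof -
    have "(\<lambda>s. z s * exp (Bi s) - 1) t = 0"
    proof (rule ode_zero[where f = "\<lambda>s. z s * exp (Bi s) - 1" and T = t and f' = "\<lambda>_. 0" and L = 0])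
      fix s assume s: "0 \<le> s" "s \<le> t"
      have "((\<lambda>s. z s * exp (Bi s) - 1) has_real_derivative
              (- \<beta> s * z s) * exp (Bi s) + z s * (exp (Bi s) * \<beta> s)) (at s within {0..t})"
      proof -
        have a: "(z has_real_derivative (- \<beta> s * z s)) (at s within {0..t})" by (rule zd) (use s in auto)
        have b: "((\<lambda>s. exp (Bi s)) has_real_derivative exp (Bi s) * \<beta> s) (at s within {0..t})"
          by (rule DERIV_chain2[OF DERIV_exp Bid]) (use s in auto)
        show ?thesis using DERIV_diff[OF DERIV_mult[OF a b] DERIV_const[of 1]] by simp
      qed
      then show "((\<lambda>s. z s * exp (Bi s) - 1) has_vector_derivative 0) (at s within {0..t})"
        by (simp add: has_real_derivative_iff_has_vector_derivative[symmetric] algebra_simps)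
    qed (use that z_init Bi_def in auto)
    then show ?thesis by (simp add: exp_minus field_simps)
  qed
  have zpos: "z t > 0" if "0 \<le> t" for t using z_exp[OF that] by simp
  define J where "J t = integral {0..t} (\<lambda>s. (1 / z s) *\<^sub>R Phi s)" for t
  define P where "P t = z t *\<^sub>R (f0 *\<^sub>R mat 1 + \<alpha> *\<^sub>R J t)" for t
  have cJi: "continuous_on {0..} (\<lambda>s. (1 / z s) *\<^sub>R Phi s)"
    by (intro continuous_intros cz cPhi) (use zpos in force)
  have Jd: "(J has_vector_derivative (1 / z t) *\<^sub>R Phi t) (at t within {0..T})" if "0 \<le> t" "t \<le> T" for t T
    unfolding J_def
    by (rule integral_has_vector_derivative) (use that continuous_on_subset[OF cJi sub] in auto)
  have Pd: "(P has_vector_derivative (- \<beta> t) *\<^sub>R P t + \<alpha> *\<^sub>R Phi t) (at t within {0..T})"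
    if "0 \<le> t" "t \<le> T" for t T
  proof -
    have g: "((\<lambda>t. f0 *\<^sub>R mat 1 + \<alpha> *\<^sub>R J t) has_vector_derivative \<alpha> *\<^sub>R ((1 / z t) *\<^sub>R Phi t)) (at t within {0..T})"
      using Jd[OF that] by (auto intro!: derivative_eq_intros)
    have "(P has_vector_derivative z t *\<^sub>R (\<alpha> *\<^sub>R ((1 / z t) *\<^sub>R Phi t)) + (- \<beta> t * z t) *\<^sub>R (f0 *\<^sub>R mat 1 + \<alpha> *\<^sub>R J t)) (at t within {0..T})"
      unfolding P_def by (rule has_vector_derivative_scaleR[OF zd[OF that(1)] g])
    moreover have "z t *\<^sub>R (\<alpha> *\<^sub>R ((1 / z t) *\<^sub>R Phi t)) + (- \<beta> t * z t) *\<^sub>R (f0 *\<^sub>R mat 1 + \<alpha> *\<^sub>R J t)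
        = (- \<beta> t) *\<^sub>R P t + \<alpha> *\<^sub>R Phi t"
      using zpos[OF that(1)] by (simp add: P_def scaleR_scaleR algebra_simps)
    ultimately show ?thesis by simp
  qed
  have J0: "J 0 = 0" by (simp add: J_def)
  have cA: "continuous_on {0..} (\<lambda>t. - \<alpha> *\<^sub>R (F t ** Phi t))"
    by (intro continuous_intros cont_mm cF cPhi)
  have FP: "F t ** P t = mat 1" if "0 \<le> t" for t
  proof -
    have "(\<lambda>s. F s ** P s - mat 1) t = 0"
    proof (rule lin_ode_zero_mat[where X = "\<lambda>s. F s ** P s - mat 1" and T = t and A = "\<lambda>t. - \<alpha> *\<^sub>R (F t ** Phi t)"])
      show "continuous_on {0..t} (\<lambda>t. - \<alpha> *\<^sub>R (F t ** Phi t))"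
        by (rule continuous_on_subset[OF cA sub])
      fix s assume s: "0 \<le> s" "s \<le> t"
      have "((\<lambda>s. F s ** P s - mat 1) has_vector_derivative
          F s ** ((- \<beta> s) *\<^sub>R P s + \<alpha> *\<^sub>R Phi s) + (- \<alpha> *\<^sub>R (F s ** Phi s ** F s) + \<beta> s *\<^sub>R F s) ** P s)
          (at s within {0..t})"
        using bounded_bilinear.has_vector_derivative[OF bounded_bilinear_matrix_mult Fd[OF s(1)] Pd[OF s]]
        by (simp add: has_vector_derivative_diff_const)
      moreover have "F s ** ((- \<beta> s) *\<^sub>R P s + \<alpha> *\<^sub>R Phi s) + (- \<alpha> *\<^sub>R (F s ** Phi s ** F s) + \<beta> s *\<^sub>R F s) ** P s
          = (- \<alpha> *\<^sub>R (F s ** Phi s)) ** (F s ** P s - mat 1)"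
        by (simp add: matrix_add_ldistrib matrix_add_rdistrib matrix_diff_ldistrib matrix_diff_rdistrib matrix_minus_left matrix_minus_right matrix_scalar_ac
            scalar_matrix_assoc[symmetric] matrix_mul_assoc algebra_simps)
      ultimately show "((\<lambda>s. F s ** P s - mat 1) has_vector_derivative
          (- \<alpha> *\<^sub>R (F s ** Phi s)) ** (F s ** P s - mat 1)) (at s within {0..t})" by simp
    qed (use that F_init J0 gains in \<open>auto simp: P_def z_init matrix_scalar_ac scalar_matrix_assoc[symmetric]\<close>)
    then show ?thesis by simp
  qed
  have PF: "P t ** F t = mat 1" if "0 \<le> t" for t using FP[OF that] matrix_left_right_inverse by blast
  define w0 where "w0 = \<mu>0 - \<eta>"
  have mu_eq: "\<mu>h t = \<eta> + (z t * f0) *\<^sub>R (F t *v w0)" if "0 \<le> t" for t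
  proof -
    have "(\<lambda>s. \<mu>h s - \<eta> - (z s * f0) *\<^sub>R (F s *v w0)) t = 0"
    proof (rule lin_ode_zero_vec[where x = "\<lambda>s. \<mu>h s - \<eta> - (z s * f0) *\<^sub>R (F s *v w0)" and T = t and A = "\<lambda>t. - \<alpha> *\<^sub>R (F t ** Phi t)"])
      show "continuous_on {0..t} (\<lambda>t. - \<alpha> *\<^sub>R (F t ** Phi t))"
        by (rule continuous_on_subset[OF cA sub])
      fix s assume s: "0 \<le> s" "s \<le> t"
      have a: "((\<lambda>s. z s * f0) has_real_derivative (- \<beta> s * z s) * f0) (at s within {0..t})"
        using zd[OF s(1)] by (rule DERIV_cmult_right)
      have b: "((\<lambda>s. F s *v w0) has_vector_derivative
          (- \<alpha> *\<^sub>R (F s ** Phi s ** F s) + \<beta> s *\<^sub>R F s) *v w0) (at s within {0..t})"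
        by (rule bounded_linear.has_vector_derivative[OF bounded_linear_mv Fd[OF s(1)]])
      have "((\<lambda>s. \<mu>h s - \<eta> - (z s * f0) *\<^sub>R (F s *v w0)) has_vector_derivative
          (\<alpha> * (y s - \<phi> s \<bullet> \<mu>h s)) *\<^sub>R (F s *v \<phi> s) -
          ((z s * f0) *\<^sub>R ((- \<alpha> *\<^sub>R (F s ** Phi s ** F s) + \<beta> s *\<^sub>R F s) *v w0) + ((- \<beta> s * z s) * f0) *\<^sub>R (F s *v w0)))
          (at s within {0..t})"
      proof -
        have c1: "((\<lambda>s. \<mu>h s - \<eta>) has_vector_derivative (\<alpha> * (y s - \<phi> s \<bullet> \<mu>h s)) *\<^sub>R (F s *v \<phi> s)) (at s within {0..t})"
          using has_vector_derivative_diff[OF mud[OF s(1)] has_vector_derivative_const[of \<eta>]] by simp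
        show ?thesis by (rule has_vector_derivative_diff[OF c1 has_vector_derivative_scaleR[OF a b]])
      qed
      moreover have "(\<alpha> * (y s - \<phi> s \<bullet> \<mu>h s)) *\<^sub>R (F s *v \<phi> s) -
          ((z s * f0) *\<^sub>R ((- \<alpha> *\<^sub>R (F s ** Phi s ** F s) + \<beta> s *\<^sub>R F s) *v w0) + ((- \<beta> s * z s) * f0) *\<^sub>R (F s *v w0))
          = (- \<alpha> *\<^sub>R (F s ** Phi s)) *v (\<mu>h s - \<eta> - (z s * f0) *\<^sub>R (F s *v w0))"
        using regression s(1)
        by (simp add: mv_minus_left matrix_vector_mul_assoc[symmetric] Phi_v matrix_vector_mult_add_rdistrib
            scaleR_matrix_vector_assoc[symmetric] matrix_vector_mult_scaleR matrix_vector_mult_diff_distrib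
            inner_diff_right inner_commute algebra_simps)
      ultimately show "((\<lambda>s. \<mu>h s - \<eta> - (z s * f0) *\<^sub>R (F s *v w0)) has_vector_derivative
          (- \<alpha> *\<^sub>R (F s ** Phi s)) *v (\<mu>h s - \<eta> - (z s * f0) *\<^sub>R (F s *v w0))) (at s within {0..t})"
        by simp
    qed (use that F_init mu_init gains in \<open>auto simp: z_init w0_def scaleR_matrix_vector_assoc[symmetric]\<close>)
    then show ?thesis by (simp add: algebra_simps)
  qed
  have intJ: "(\<lambda>s. (1 / z s) *\<^sub>R Phi s) integrable_on {0..t}" if "0 \<le> t" for t
    by (rule integrable_continuous_interval) (rule continuous_on_subset[OF cJi sub])
  have Jq: "v \<bullet> (J t *v v) = integral {0..t} (\<lambda>s. (\<phi> s \<bullet> v)^2 / z s)" if "0 \<le> t" for t v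
  proof -
    have "v \<bullet> (J t *v v) = integral {0..t} ((\<lambda>A. v \<bullet> (A *v v)) \<circ> (\<lambda>s. (1 / z s) *\<^sub>R Phi s))"
      unfolding J_def by (rule integral_linear[OF intJ[OF that] bounded_linear_quad, symmetric])
    also have "\<dots> = integral {0..t} (\<lambda>s. (\<phi> s \<bullet> v)^2 / z s)"
      by (simp add: o_def scaleR_matrix_vector_assoc[symmetric] Phi_q)
    finally show ?thesis .
  qed
  have Jnn: "0 \<le> v \<bullet> (J t *v v)" if "0 \<le> t" for t v
  proof -
    have "(\<lambda>s. (\<phi> s \<bullet> v)^2 / z s) integrable_on {0..t}"
      by (rule integrable_continuous_interval)
         (intro continuous_intros continuous_on_subset[OF cphi sub] continuous_on_subset[OF cz sub],
          use zpos in force)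
    then show ?thesis unfolding Jq[OF that] by (rule integral_nonneg) (use zpos in \<open>auto intro!: divide_nonneg_pos\<close>)
  qed
  have Jsym: "transpose (J t) = J t" if "0 \<le> t" for t
  proof -
    have "transpose (J t) = integral {0..t} (transpose \<circ> (\<lambda>s. (1 / z s) *\<^sub>R Phi s))"
      unfolding J_def by (rule integral_linear[OF intJ[OF that] bounded_linear_transpose_m, symmetric])
    also have "\<dots> = J t" by (simp add: o_def J_def transpose_scalar Phi_T)
    finally show ?thesis .
  qed
  have Psym: "transpose (P t) = P t" if "0 \<le> t" for t
    by (simp add: P_def transpose_scalar transpose_add_m Jsym[OF that])
  have Ppos: "z t * f0 * (v \<bullet> v) \<le> v \<bullet> (P t *v v)" if "0 \<le> t" for t v
  proof -
    have "v \<bullet> (P t *v v) = z t * f0 * (v \<bullet> v) + z t * \<alpha> * (v \<bullet> (J t *v v))"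
      by (simp add: P_def scaleR_matrix_vector_assoc[symmetric] matrix_vector_mult_add_rdistrib
          inner_add_right algebra_simps)
    moreover have "0 \<le> z t * \<alpha> * (v \<bullet> (J t *v v))"
      using zpos[OF that] gains Jnn[OF that] by simp
    ultimately show ?thesis by simp
  qed
  have Fsym: "transpose (F t) = F t" if "0 \<le> t" for t
  proof -
    have "transpose (F t) = transpose (F t) ** (P t ** F t)" by (simp add: PF[OF that])
    also have "\<dots> = transpose (P t ** F t) ** F t"
      by (simp add: matrix_mul_assoc matrix_transpose_mul Psym[OF that])
    finally show ?thesis by (simp add: PF[OF that])
  qed
  have Fpsd: "0 \<le> x \<bullet> (F t *v x)" if "0 \<le> t" for t x
  proof -
    have "x = P t *v (F t *v x)" by (simp add: matrix_vector_mul_assoc PF[OF that])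
    then have "x \<bullet> (F t *v x) = (F t *v x) \<bullet> (P t *v (F t *v x))" by (metis inner_commute)
    also have "\<dots> \<ge> z t * f0 * ((F t *v x) \<bullet> (F t *v x))" by (rule Ppos[OF that])
    finally show ?thesis using zpos[OF that] gains by (smt (verit) inner_ge_zero mult_nonneg_nonneg)
  qed
  have cg: "continuous_on {0..} (\<lambda>t. mat_norm (F t))" by (rule continuous_on_mat_norm[OF cF])
  have qd: "((\<lambda>s. v \<bullet> (P s *v v)) has_real_derivative (- \<beta> s) * (v \<bullet> (P s *v v)) + \<alpha> * (\<phi> s \<bullet> v)^2) (at s within {0..T})"
    if "0 \<le> s" "s \<le> T" for s T v
  proof -
    have "v \<bullet> (((- \<beta> s) *\<^sub>R P s + \<alpha> *\<^sub>R Phi s) *v v) = (- \<beta> s) * (v \<bullet> (P s *v v)) + \<alpha> * (\<phi> s \<bullet> v)^2"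
      by (simp add: matrix_vector_mult_add_rdistrib matrix_vector_mult_diff_rdistrib scaleR_matrix_vector_assoc[symmetric] inner_add_right inner_diff_right Phi_q)
    then show ?thesis
      using bounded_linear.has_vector_derivative[OF bounded_linear_quad[of v] Pd[OF that]]
      by (simp add: has_real_derivative_iff_has_vector_derivative)
  qed
  have qnn: "0 \<le> v \<bullet> (P s *v v)" if "0 \<le> s" for s v
    using Ppos[OF that, of v] zpos[OF that] gains
    by (smt (verit) inner_ge_zero mult_nonneg_nonneg)
  have F0n: "mat_norm (F 0) \<le> M"
  proof -
    have "mat_norm (F 0) \<le> 1 / f0" unfolding mat_norm_def F_init
      by (rule onorm_le) (use gains in \<open>simp add: scaleR_matrix_vector_assoc[symmetric]\<close>)
    then show ?thesis using gains by linarith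
  qed
  have normF: "mat_norm (F t) \<le> M" if "0 \<le> t" for t
  proof (rule ccontr)
    assume "\<not> ?thesis" then have gt: "mat_norm (F t) > M" by simp
    define S where "S = {0..t} \<inter> (\<lambda>s. mat_norm (F s)) -` {..M}"
    have clS: "closed S" unfolding S_def
      by (rule continuous_closed_preimage) (auto intro: continuous_on_subset[OF cg sub])
    have S0: "0 \<in> S" using F0n that by (simp add: S_def)
    have bS: "bdd_above S" unfolding S_def by (rule bdd_aboveI[where M=t]) auto
    define t0 where "t0 = Sup S"
    have t0S: "t0 \<in> S" unfolding t0_def using closed_contains_Sup[OF _ bS clS] S0 by auto
    have t0: "0 \<le> t0" "t0 \<le> t" "mat_norm (F t0) \<le> M" using t0S by (auto simp: S_def)
    have after: "mat_norm (F s) > M" if "t0 < s" "s \<le> t" for s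
    proof (rule ccontr)
      assume "\<not> ?thesis" then have "s \<in> S" using that t0 by (auto simp: S_def)
      then have "s \<le> t0" unfolding t0_def by (rule cSup_upper[OF _ bS])
      then show False using that by simp
    qed
    have low: "(1 / M) * (v \<bullet> v) \<le> v \<bullet> (P t *v v)" for v
    proof -
      have "v \<bullet> v \<le> mat_norm (F t0) * (v \<bullet> (P t0 *v v))" unfolding mat_norm_def
        by (rule key_lower[OF FP[OF t0(1)] Fsym[OF t0(1)] Fpsd[OF t0(1)]])
      also have "\<dots> \<le> M * (v \<bullet> (P t0 *v v))"
        by (rule mult_right_mono[OF t0(3) qnn[OF t0(1)]])
      also have "v \<bullet> (P t0 *v v) \<le> v \<bullet> (P t *v v)"
      proof (rule deriv_nonneg_mono[where f = "\<lambda>s. v \<bullet> (P s *v v)" and a = t0 and b = t])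
        show "t0 \<le> t" by (rule t0(2))
        fix s assume s: "t0 \<le> s" "s \<le> t"
        show "((\<lambda>s. v \<bullet> (P s *v v)) has_real_derivative (- \<beta> s) * (v \<bullet> (P s *v v)) + \<alpha> * (\<phi> s \<bullet> v)^2) (at s within {t0..t})"
          by (rule DERIV_subset[OF qd]) (use s t0 in auto)
      next
        fix s assume s: "t0 < s" "s < t"
        have "\<beta> s < 0" using after[of s] s Mpos gains by (simp add: beta_def field_simps mult_pos_neg)
        then show "0 \<le> (- \<beta> s) * (v \<bullet> (P s *v v)) + \<alpha> * (\<phi> s \<bullet> v)^2"
          using qnn[of s v] s t0 gains by (intro add_nonneg_nonneg mult_nonneg_nonneg) auto
      qed
      then have "M * (v \<bullet> (P t0 *v v)) \<le> M * (v \<bullet> (P t *v v))" using Mpos by simp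
      finally show ?thesis using Mpos by (simp add: field_simps)
    qed
    have "mat_norm (F t) \<le> 1 / (1 / M)" unfolding mat_norm_def
      by (rule key_upper[OF PF[OF that] _ low]) (use Mpos in simp)
    then show False using gt Mpos by simp
  qed
  have beta_nn: "0 \<le> \<beta> t" if "0 \<le> t" for t
    using normF[OF that] Mpos gains by (simp add: beta_def field_simps)
  have zle1: "z t \<le> 1" if "0 \<le> t" for t
  proof -
    have "(\<lambda>s. - z s) 0 \<le> (\<lambda>s. - z s) t"
    proof (rule deriv_nonneg_mono[where f = "\<lambda>s. - z s" and a = 0 and b = t and f' = "\<lambda>s. \<beta> s * z s"])
      show "0 \<le> t" by (rule that)
      fix s assume s: "0 \<le> s" "s \<le> t"
      show "((\<lambda>s. - z s) has_real_derivative \<beta> s * z s) (at s within {0..t})"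
        using DERIV_minus[OF zd[OF s(1)]] by simp
    next
      fix s assume s: "0 < s" "s < t"
      show "0 \<le> \<beta> s * z s" using beta_nn[of s] zpos[of s] s by simp
    qed
    then show ?thesis using z_init by simp
  qed
  have intg: "(\<lambda>s. (\<phi> s \<bullet> v)^2 / z s) integrable_on {0..t}" if "0 \<le> t" for t v
    by (rule integrable_continuous_interval)
       (intro continuous_intros continuous_on_subset[OF cphi sub] continuous_on_subset[OF cz sub],
        use zpos that in force)
  obtain Q where hQ: "(Phi has_integral Q) {0..t_c}" and Qpos: "\<And>v. c_c * (v \<bullet> v) \<le> v \<bullet> (Q *v v)"
  proof -
    have "Phi = (\<lambda>s. \<chi> i j. \<phi> s $ i * \<phi> s $ j)" by (rule ext) (simp add: Phi_def)
    then show ?thesis using IE(3) that by auto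
  qed
  have Jlow: "c_c * (v \<bullet> v) \<le> v \<bullet> (J t *v v)" if "t_c \<le> t" for t v
  proof -
    have tc0: "0 \<le> t_c" using IE by simp
    have h1: "((\<lambda>s. (\<phi> s \<bullet> v)^2) has_integral v \<bullet> (Q *v v)) {0..t_c}"
      using has_integral_linear[OF hQ bounded_linear_quad[of v]] by (simp add: o_def Phi_q)
    have "c_c * (v \<bullet> v) \<le> v \<bullet> (Q *v v)" by (rule Qpos)
    also have "\<dots> = integral {0..t_c} (\<lambda>s. (\<phi> s \<bullet> v)^2)" using h1 by (simp add: integral_unique)
    also have "\<dots> \<le> integral {0..t_c} (\<lambda>s. (\<phi> s \<bullet> v)^2 / z s)"
    proof (rule integral_le)
      show "(\<lambda>s. (\<phi> s \<bullet> v)^2) integrable_on {0..t_c}" using h1 by blast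
      show "(\<lambda>s. (\<phi> s \<bullet> v)^2 / z s) integrable_on {0..t_c}" by (rule intg[OF tc0])
      fix s assume "s \<in> {0..t_c}"
      then have "0 < z s" "z s \<le> 1" using zpos zle1 by auto
      then show "(\<phi> s \<bullet> v)^2 \<le> (\<phi> s \<bullet> v)^2 / z s"
        by (simp add: le_divide_eq mult_left_le)
    qed
    also have "\<dots> \<le> integral {0..t} (\<lambda>s. (\<phi> s \<bullet> v)^2 / z s)"
      by (rule integral_subset_le) (use that tc0 intg zpos in \<open>auto intro!: divide_nonneg_pos\<close>)
    also have "\<dots> = v \<bullet> (J t *v v)" using Jq[of t v] that tc0 by simp
    finally show ?thesis .
  qed
  define Am where "Am t = mat 1 - (z t * f0) *\<^sub>R F t" for t
  define Cc where "Cc = 1 + f0 / (\<alpha> * c_c)"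
  have Cc1: "1 \<le> Cc" using gains IE by (simp add: Cc_def)
  have Am_inv: "norm w \<le> Cc * norm x" if t: "t_c \<le> t" and wx: "Am t *v w = x" for t w x
  proof -
    have t0: "0 \<le> t" using t IE by simp
    have e1: "P t *v (Am t *v u) = P t *v u - (z t * f0) *\<^sub>R u" for u
      by (simp add: Am_def matrix_vector_mult_diff_rdistrib scaleR_matrix_vector_assoc[symmetric]
          matrix_vector_mult_scaleR matrix_vector_mult_diff_distrib matrix_vector_mul_assoc PF[OF t0])
    have e2: "P t *v u = (z t * f0) *\<^sub>R u + (z t * \<alpha>) *\<^sub>R (J t *v u)" for u
      by (simp add: P_def matrix_vector_mult_add_rdistrib scaleR_matrix_vector_assoc[symmetric] scaleR_add_right)
    define d where "d = w - x"
    have "(z t * \<alpha>) *\<^sub>R (J t *v w) = (z t * f0) *\<^sub>R x + (z t * \<alpha>) *\<^sub>R (J t *v x)"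
      using e1[of w] e2[of w] e2[of x] wx by simp
    then have "(z t * \<alpha>) *\<^sub>R (J t *v d) = (z t * f0) *\<^sub>R x"
      by (simp add: d_def matrix_vector_mult_diff_distrib scaleR_diff_right)
    then have "z t *\<^sub>R (\<alpha> *\<^sub>R (J t *v d)) = z t *\<^sub>R (f0 *\<^sub>R x)" by (simp only: scaleR_scaleR)
    then have ed: "\<alpha> *\<^sub>R (J t *v d) = f0 *\<^sub>R x" using zpos[OF t0] by (metis scaleR_cancel_left less_irrefl)
    have "\<alpha> * (c_c * (d \<bullet> d)) \<le> \<alpha> * (d \<bullet> (J t *v d))"
      using Jlow[OF t, of d] gains by simp
    also have "\<dots> = f0 * (d \<bullet> x)" using arg_cong[OF ed, of "\<lambda>u. d \<bullet> u"] by simp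
    also have "\<dots> \<le> f0 * (norm d * norm x)" using gains by (simp add: norm_cauchy_schwarz)
    finally have ineq: "(\<alpha> * c_c) * (norm d * norm d) \<le> f0 * (norm d * norm x)"
      by (simp add: power2_norm_eq_inner[symmetric] power2_eq_square mult_ac)
    have nd: "norm d \<le> f0 / (\<alpha> * c_c) * norm x"
    proof (cases "norm d = 0")
      case True then show ?thesis using gains IE by simp
    next
      case False
      then have "(\<alpha> * c_c) * norm d \<le> f0 * norm x" using ineq
        by (simp add: mult_ac)
      then show ?thesis using gains IE by (simp add: field_simps)
    qed
    have "norm w \<le> norm x + norm d" unfolding d_def by (metis add.commute diff_add_cancel norm_triangle_ineq)
    also have "\<dots> \<le> Cc * norm x" using nd by (simp add: Cc_def algebra_simps)
    finally show ?thesis .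
  qed
  define \<delta> where "\<delta> = 1 / (real (fact 5) * Cc ^ 5)"
  have \<delta>pos: "\<delta> > 0" using Cc1 by (simp add: \<delta>_def)
  have Delta_low: "\<delta> \<le> \<bar>\<Delta> t\<bar>" if t: "t_c \<le> t" for t
  proof -
    have injA: "inj ((*v) (Am t))"
    proof (rule injI)
      fix a b assume "Am t *v a = Am t *v b"
      then have "Am t *v (a - b) = 0" by (simp add: matrix_vector_mult_diff_distrib)
      then have "norm (a - b) \<le> Cc * norm (0::real^5)" by (rule Am_inv[OF t])
      then show "a = b" by simp
    qed
    have "det (Am t) \<noteq> 0"
      using det_nz_iff_inj[OF matrix_vector_mul_linear[of "Am t"]] injA
      by (simp add: matrix_of_matrix_vector_mul)
    then obtain B where AB: "Am t ** B = mat 1"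
      using invertible_det_nz invertible_def by blast
    have Bb: "\<bar>B$i$j\<bar> \<le> Cc" for i j
    proof -
      have "Am t *v (B *v axis j 1) = axis j 1" by (simp add: matrix_vector_mul_assoc AB)
      then have "norm (B *v axis j 1) \<le> Cc * norm (axis j (1::real))" by (rule Am_inv[OF t])
      moreover have "\<bar>B$i$j\<bar> \<le> norm (B *v axis j 1)"
        using component_le_norm_cart[of "B *v axis j 1" i]
        by (simp add: matrix_vector_mult_def axis_def if_distrib cong: if_cong)
      ultimately show ?thesis by simp
    qed
    have dB: "\<bar>det B\<bar> \<le> real (fact 5) * Cc ^ 5"
      using det_bound[of B Cc, OF Bb] by simp
    have "det (Am t) * det B = 1" using det_mul[of "Am t" B] AB by simp
    then have "\<bar>det (Am t)\<bar> * \<bar>det B\<bar> = 1" by (metis abs_mult abs_one)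
    then have "\<bar>det (Am t)\<bar> = 1 / \<bar>det B\<bar>" by (metis mult.commute nonzero_eq_divide_eq zero_neq_one mult_zero_left)
    moreover have "1 / (real (fact 5) * Cc ^ 5) \<le> 1 / \<bar>det B\<bar>"
      using dB \<open>\<bar>det (Am t)\<bar> * \<bar>det B\<bar> = 1\<close> Cc1
      by (intro divide_left_mono) (auto simp: zero_less_mult_iff)
    ultimately show ?thesis by (simp add: \<delta>_def Delta_def Am_def)
  qed
  have Y_eq: "Yc t = \<Delta> t *\<^sub>R \<eta>" if "0 \<le> t" for t
  proof -
    have "\<mu>h t - (z t * f0) *\<^sub>R (F t *v \<mu>0) = Am t *v \<eta>"
      by (simp add: mu_eq[OF that] Am_def w0_def matrix_vector_mult_diff_distrib
          matrix_vector_mult_diff_rdistrib scaleR_matrix_vector_assoc[symmetric] algebra_simps)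
    then show ?thesis by (simp add: Y_def Delta_def Am_def[symmetric] adjugate_mult)
  qed
  define \<eta>t :: "real^4" where "\<eta>t = vector [\<theta>1 * \<theta>3, \<theta>2, \<theta>3, \<theta>4]"
  have Yv: "vector [Yc t $ 1, Yc t $ 2, Yc t $ 3, Yc t $ 4] = \<Delta> t *\<^sub>R \<eta>t" if "0 \<le> t" for t
    unfolding vec_eq_iff forall_4 by (simp add: Y_eq[OF that] eta_def \<eta>t_def)
  have Delta_eq: "\<Delta> = (\<lambda>t. det (mat 1 - (z t * f0) *\<^sub>R F t))" using Delta_def by auto
  have cDelta: "continuous_on {0..} \<Delta>"
    unfolding Delta_eq by (intro continuous_on_det continuous_intros cz cF)
  define D where "D t = integral {0..t} (\<lambda>s. (\<Delta> s)^2)" for t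
  have Dd: "(D has_real_derivative (\<Delta> t)^2) (at t within {0..T})" if "0 \<le> t" "t \<le> T" for t T
    unfolding D_def has_real_derivative_iff_has_vector_derivative
    by (rule integral_has_vector_derivative)
       (use that continuous_on_subset[OF cDelta sub] in \<open>auto intro!: continuous_intros\<close>)
  have D0: "D 0 = 0" by (simp add: D_def)
  have etad: "(\<eta>h has_vector_derivative (- (\<gamma>a * (\<Delta> t)^2)) *\<^sub>R (\<eta>h t - \<eta>t)) (at t within {0..T})"
    if "0 \<le> t" for t T
  proof -
    have "(\<eta>h has_vector_derivative ((\<gamma>a * \<Delta> t) *\<^sub>R (vector [Yc t $ 1, Yc t $ 2, Yc t $ 3, Yc t $ 4] - \<Delta> t *\<^sub>R \<eta>h t)))
          (at t within {0..T})"
      using eta_ode that by (auto intro: has_vector_derivative_within_subset[OF _ sub])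
    moreover have "(\<gamma>a * \<Delta> t) *\<^sub>R (vector [Yc t $ 1, Yc t $ 2, Yc t $ 3, Yc t $ 4] - \<Delta> t *\<^sub>R \<eta>h t)
        = (- (\<gamma>a * (\<Delta> t)^2)) *\<^sub>R (\<eta>h t - \<eta>t)"
      by (simp add: Yv[OF that] scaleR_diff_right power2_eq_square algebra_simps)
    ultimately show ?thesis by simp
  qed
  define E where "E t = exp (- (\<gamma>a * D t))" for t
  have eta_sol: "\<eta>h t = \<eta>t + E t *\<^sub>R (\<eta>0 - \<eta>t)" if "0 \<le> t" for t
  proof -
    have "(\<lambda>s. exp (\<gamma>a * D s) *\<^sub>R (\<eta>h s - \<eta>t) - (\<eta>0 - \<eta>t)) t = 0"
    proof (rule ode_zero[where f = "\<lambda>s. exp (\<gamma>a * D s) *\<^sub>R (\<eta>h s - \<eta>t) - (\<eta>0 - \<eta>t)" and T = t and f' = "\<lambda>_. 0" and L = 0])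
      fix s assume s: "0 \<le> s" "s \<le> t"
      have a: "((\<lambda>s. exp (\<gamma>a * D s)) has_real_derivative exp (\<gamma>a * D s) * (\<gamma>a * (\<Delta> s)^2)) (at s within {0..t})"
        by (rule DERIV_chain2[OF DERIV_exp DERIV_cmult[OF Dd[OF s]]])
      have b: "((\<lambda>s. \<eta>h s - \<eta>t) has_vector_derivative (- (\<gamma>a * (\<Delta> s)^2)) *\<^sub>R (\<eta>h s - \<eta>t)) (at s within {0..t})"
        using has_vector_derivative_diff[OF etad[OF s(1)] has_vector_derivative_const[of \<eta>t]] by simp
      have "((\<lambda>s. exp (\<gamma>a * D s) *\<^sub>R (\<eta>h s - \<eta>t) - (\<eta>0 - \<eta>t)) has_vector_derivative
          exp (\<gamma>a * D s) *\<^sub>R ((- (\<gamma>a * (\<Delta> s)^2)) *\<^sub>R (\<eta>h s - \<eta>t)) + (exp (\<gamma>a * D s) * (\<gamma>a * (\<Delta> s)^2)) *\<^sub>R (\<eta>h s - \<eta>t) - 0)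
          (at s within {0..t})"
        by (rule has_vector_derivative_diff[OF has_vector_derivative_scaleR[OF a b] has_vector_derivative_const])
      then show "((\<lambda>s. exp (\<gamma>a * D s) *\<^sub>R (\<eta>h s - \<eta>t) - (\<eta>0 - \<eta>t)) has_vector_derivative 0) (at s within {0..t})"
        by (simp add: scaleR_scaleR)
    qed (use that D0 eta_init in auto)
    then have "exp (\<gamma>a * D t) *\<^sub>R (\<eta>h t - \<eta>t) = \<eta>0 - \<eta>t" by simp
    then have "exp (- (\<gamma>a * D t)) *\<^sub>R (exp (\<gamma>a * D t) *\<^sub>R (\<eta>h t - \<eta>t)) = E t *\<^sub>R (\<eta>0 - \<eta>t)"
      by (simp add: E_def)
    then show ?thesis by (simp add: scaleR_scaleR exp_minus field_simps)
  qed
  have Dnn: "0 \<le> D t" if "0 \<le> t" for t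
  proof -
    have "D 0 \<le> D t"
      by (rule deriv_nonneg_mono[where f = D and a = 0 and b = t and f' = "\<lambda>s. (\<Delta> s)^2"])
         (use that Dd in auto)
    then show ?thesis using D0 by simp
  qed
  have Dlow: "\<delta>^2 * (t - t_c) \<le> D t" if "0 \<le> t" for t
  proof (cases "t \<le> t_c")
    case True
    then have "\<delta>^2 * (t - t_c) \<le> 0" by (simp add: mult_nonneg_nonpos)
    then show ?thesis using Dnn[OF that] by linarith
  next
    case False
    have tc0: "0 \<le> t_c" using IE by simp
    have "(\<lambda>s. D s - \<delta>^2 * s) t_c \<le> (\<lambda>s. D s - \<delta>^2 * s) t"
    proof (rule deriv_nonneg_mono[where f = "\<lambda>s. D s - \<delta>^2 * s" and a = t_c and b = t and f' = "\<lambda>s. (\<Delta> s)^2 - \<delta>^2"])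
      show "t_c \<le> t" using False by simp
      fix s assume s: "t_c \<le> s" "s \<le> t"
      have "(D has_real_derivative (\<Delta> s)^2) (at s within {t_c..t})"
        by (rule DERIV_subset[OF Dd]) (use s tc0 in auto)
      then show "((\<lambda>s. D s - \<delta>^2 * s) has_real_derivative (\<Delta> s)^2 - \<delta>^2) (at s within {t_c..t})"
        by (auto intro!: derivative_eq_intros)
    next
      fix s assume s: "t_c < s" "s < t"
      have "\<delta>^2 \<le> (\<bar>\<Delta> s\<bar>)^2" using Delta_low[of s] s \<delta>pos by (intro power_mono) auto
      then show "0 \<le> (\<Delta> s)^2 - \<delta>^2" by simp
    qed
    then have "D t_c - \<delta>^2 * t_c \<le> D t - \<delta>^2 * t" by simp
    then show ?thesis using Dnn[OF tc0] by (simp add: algebra_simps)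
  qed
  define \<rho> where "\<rho> = \<gamma>a * \<delta>^2"
  have \<rho>pos: "\<rho> > 0" using gains \<delta>pos by (simp add: \<rho>_def)
  have Epos: "0 < E t" for t by (simp add: E_def)
  have Ele1: "E t \<le> 1" if "0 \<le> t" for t using Dnn[OF that] gains by (simp add: E_def)
  have Eexp: "E t \<le> exp (\<rho> * t_c) * exp (- \<rho> * t)" if "0 \<le> t" for t
  proof -
    have "- (\<gamma>a * D t) \<le> \<rho> * t_c + (- \<rho> * t)"
      using mult_left_mono[OF Dlow[OF that], of \<gamma>a] gains by (simp add: \<rho>_def algebra_simps)
    then show ?thesis unfolding E_def by (simp add: exp_add[symmetric])
  qed
  define e0 where "e0 = \<eta>0 - \<eta>t"
  define m3 where "m3 = min \<theta>3 (\<eta>0 $ 3)"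
  have m3pos: "m3 > 0" using theta_pos eta0_pos by (simp add: m3_def)
  have eh: "\<eta>h t $ k = \<eta>t $ k + E t * e0 $ k" if "0 \<le> t" for t k
    using eta_sol[OF that] by (simp add: e0_def)
  have h3: "m3 \<le> \<eta>h t $ 3" if "0 \<le> t" for t
  proof -
    have "\<eta>h t $ 3 = (1 - E t) * \<theta>3 + E t * \<eta>0 $ 3" using eh[OF that, of 3] by (simp add: \<eta>t_def e0_def algebra_simps)
    moreover have "(1 - E t) * m3 \<le> (1 - E t) * \<theta>3" using Ele1[OF that] by (intro mult_left_mono) (auto simp: m3_def)
    moreover have "E t * m3 \<le> E t * \<eta>0 $ 3" using Epos[of t] by (intro mult_left_mono) (auto simp: m3_def)
    ultimately show ?thesis by (simp add: algebra_simps)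
  qed
  define K0 where "K0 = (\<bar>e0 $ 1\<bar> + \<theta>1 * \<bar>e0 $ 3\<bar>) / m3 + \<bar>e0 $ 2\<bar> + \<bar>e0 $ 3\<bar> + \<bar>e0 $ 4\<bar>"
  have K0nn: "0 \<le> K0" using m3pos theta_pos by (simp add: K0_def)
  define \<theta>v :: "real^4" where "\<theta>v = vector [\<theta>1, \<theta>2, \<theta>3, \<theta>4]"
  have thb: "norm (\<theta>h t - \<theta>v) \<le> E t * K0" if "0 \<le> t" for t
  proof -
    have p3: "0 < \<eta>h t $ 3" using h3[OF that] m3pos by simp
    have c1: "(\<theta>h t - \<theta>v) $ 1 = (E t * (e0 $ 1 - \<theta>1 * e0 $ 3)) / \<eta>h t $ 3"
    proof -
      have "(\<theta>h t - \<theta>v) $ 1 = \<eta>h t $ 1 / \<eta>h t $ 3 - \<theta>1" by (simp add: thetah_def \<theta>v_def)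
      also have "\<dots> = (\<eta>h t $ 1 - \<theta>1 * \<eta>h t $ 3) / \<eta>h t $ 3" using p3 by (simp add: field_simps)
      also have "\<eta>h t $ 1 - \<theta>1 * \<eta>h t $ 3 = E t * (e0 $ 1 - \<theta>1 * e0 $ 3)"
        using eh[OF that, of 1] eh[OF that, of 3] by (simp add: \<eta>t_def algebra_simps)
      finally show ?thesis .
    qed
    have b1: "\<bar>(\<theta>h t - \<theta>v) $ 1\<bar> \<le> E t * ((\<bar>e0 $ 1\<bar> + \<theta>1 * \<bar>e0 $ 3\<bar>) / m3)"
    proof -
      have num: "\<bar>E t * (e0 $ 1 - \<theta>1 * e0 $ 3)\<bar> \<le> E t * (\<bar>e0 $ 1\<bar> + \<theta>1 * \<bar>e0 $ 3\<bar>)"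
      proof -
        have "\<bar>e0 $ 1 - \<theta>1 * e0 $ 3\<bar> \<le> \<bar>e0 $ 1\<bar> + \<bar>\<theta>1 * e0 $ 3\<bar>" by (rule abs_triangle_ineq4)
        also have "\<bar>\<theta>1 * e0 $ 3\<bar> = \<theta>1 * \<bar>e0 $ 3\<bar>" using theta_pos by (simp add: abs_mult)
        finally have "\<bar>e0 $ 1 - \<theta>1 * e0 $ 3\<bar> \<le> \<bar>e0 $ 1\<bar> + \<theta>1 * \<bar>e0 $ 3\<bar>" .
        then show ?thesis using Epos[of t] by (simp add: abs_mult mult_left_mono)
      qed
      have "\<bar>(\<theta>h t - \<theta>v) $ 1\<bar> = \<bar>E t * (e0 $ 1 - \<theta>1 * e0 $ 3)\<bar> / \<eta>h t $ 3"
        unfolding c1 using p3 by (simp add: abs_divide)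
      also have "\<dots> \<le> E t * (\<bar>e0 $ 1\<bar> + \<theta>1 * \<bar>e0 $ 3\<bar>) / m3"
        by (rule frac_le[OF _ num m3pos h3[OF that]]) (use Epos[of t] theta_pos in simp)
      finally show ?thesis by simp
    qed
    have bk: "\<bar>(\<theta>h t - \<theta>v) $ k\<bar> = E t * \<bar>e0 $ k\<bar>" if "k = 2 \<or> k = 3 \<or> k = 4" for k
      using that eh[OF \<open>0 \<le> t\<close>, of k] Epos[of t]
      by (auto simp: thetah_def \<theta>v_def \<eta>t_def abs_mult)
    have "norm (\<theta>h t - \<theta>v) \<le> (\<Sum>k\<in>UNIV. \<bar>(\<theta>h t - \<theta>v) $ k\<bar>)" by (rule norm_le_l1_cart)
    also have "\<dots> = \<bar>(\<theta>h t - \<theta>v) $ 1\<bar> + \<bar>(\<theta>h t - \<theta>v) $ 2\<bar> + \<bar>(\<theta>h t - \<theta>v) $ 3\<bar> + \<bar>(\<theta>h t - \<theta>v) $ 4\<bar>"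
      by (simp add: sum_4)
    also have "\<dots> \<le> E t * K0" using b1 bk[of 2] bk[of 3] bk[of 4] by (simp add: K0_def algebra_simps)
    finally show ?thesis .
  qed
  define c where "c = K0 * exp (\<rho> * t_c)"
  have part1: "\<forall>t\<ge>0. norm (\<theta>h t - vector [\<theta>1, \<theta>2, \<theta>3, \<theta>4]) \<le> c * exp (- \<rho> * t)"
  proof (intro allI impI)
    fix t :: real assume t: "0 \<le> t"
    have "norm (\<theta>h t - \<theta>v) \<le> E t * K0" by (rule thb[OF t])
    also have "\<dots> \<le> (exp (\<rho> * t_c) * exp (- \<rho> * t)) * K0" by (rule mult_right_mono[OF Eexp[OF t] K0nn])
    finally show "norm (\<theta>h t - vector [\<theta>1, \<theta>2, \<theta>3, \<theta>4]) \<le> c * exp (- \<rho> * t)"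
      by (simp add: c_def \<theta>v_def mult_ac)
  qed
  have cnn: "0 \<le> c" using K0nn by (simp add: c_def)
  have bmu: "bounded (\<mu>h ` {0..})"
  proof -
    have "norm (\<mu>h t) \<le> norm \<eta> + f0 * (M * norm w0)" if "0 \<le> t" for t
    proof -
      have "norm (F t *v w0) \<le> M * norm w0"
      proof -
        have "onorm ((*v) (F t)) \<le> M" using normF[OF that] by (simp add: mat_norm_def)
        then have "onorm ((*v) (F t)) * norm w0 \<le> M * norm w0" by (rule mult_right_mono) simp
        then show ?thesis using onorm[OF matrix_vector_mul_bounded_linear, of "F t" w0] by linarith
      qed
      moreover have "\<bar>z t * f0\<bar> \<le> f0" using zpos[OF that] zle1[OF that] gains by (simp add: abs_mult)
      ultimately have "norm ((z t * f0) *\<^sub>R (F t *v w0)) \<le> f0 * (M * norm w0)"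
        by (simp only: norm_scaleR) (rule mult_mono, auto)
      then show ?thesis unfolding mu_eq[OF that] by (metis norm_triangle_le add_left_mono order_trans norm_triangle_ineq)
    qed
    then show ?thesis unfolding bounded_iff by auto
  qed
  have bF: "bounded (F ` {0..})"
  proof -
    have "norm (F t) \<le> real CARD(5) * real CARD(5) * M" if "0 \<le> t" for t
    proof -
      have "onorm ((*v) (F t)) \<le> M" using normF[OF that] by (simp add: mat_norm_def)
      then have "real CARD(5) * real CARD(5) * onorm ((*v) (F t)) \<le> real CARD(5) * real CARD(5) * M"
        by (rule mult_left_mono) simp
      then show ?thesis using norm_matrix_le_onorm[of "F t"] by linarith
    qed
    then show ?thesis unfolding bounded_iff by auto
  qed
  have beta: "bounded (\<eta>h ` {0..})"
  proof -
    have "norm (\<eta>h t) \<le> norm \<eta>t + norm e0" if "0 \<le> t" for t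
    proof -
      have "norm (E t *\<^sub>R e0) \<le> norm e0" using Epos[of t] Ele1[OF that] by (simp add: mult_left_le_one_le)
      then show ?thesis using eta_sol[OF that] unfolding e0_def[symmetric]
        by (metis add_left_mono norm_triangle_ineq order_trans)
    qed
    then show ?thesis unfolding bounded_iff by auto
  qed
  have bz: "bounded (z ` {0..})"
  proof -
    have "norm (z t) \<le> 1" if "0 \<le> t" for t using zpos[OF that] zle1[OF that] by simp
    then show ?thesis unfolding bounded_iff by auto
  qed
  have bth: "bounded (\<theta>h ` {0..})"
  proof -
    have "norm (\<theta>h t) \<le> norm \<theta>v + c" if "0 \<le> t" for t
    proof -
      have "norm (\<theta>h t - \<theta>v) \<le> c * exp (- \<rho> * t)" using part1 that by (simp add: \<theta>v_def)
      also have "\<dots> \<le> c"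
      proof -
        have "exp (- \<rho> * t) \<le> 1" using \<rho>pos that by simp
        then show ?thesis using mult_left_mono[of "exp (- \<rho> * t)" 1 c] cnn by simp
      qed
      finally show ?thesis by (metis add.commute diff_add_cancel norm_triangle_le add_left_mono)
    qed
    then show ?thesis unfolding bounded_iff by auto
  qed
  show ?thesis using part1 \<rho>pos bmu bF beta bz bth by blast
qed


end
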